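(* Let $f:X\to X$ be a continuous map on a metric space $(X,d)$, let $K\subset X$ be compact and $\alpha\ge0$. Then $h_{\mathrm{est},\mathrm{cov}}(\alpha,K)=h_{\mathrm{est}}(\alpha,K)$.
   Context: Let $K_k:=f^k(K)$ and $f_k:=f|_{K_k}:K_k\to K_{k+1}$; write $f_0^{i}=f_{i-1}\circ\cdots\circ f_0$ and $f_0^{-i}(A)$ for the preimage of a set $A$ under $f_0^i$. A sequence $\mathcal U_\infty=(\mathcal U_k)_{k\ge0}$, where $\mathcal U_k$ is an open cover of $K_k$ (relative topology), is called $(\alpha,K)$-admissible if there is $\varepsilon>0$ with Lebesgue number $L(\mathcal U_k)\ge\varepsilon e^{-\alpha k}$ for all $k$ (the Lebesgue number being the greatest $r>0$ such that every ball of radius $r$ in $K_k$ lies in an element of $\mathcal U_k$). Set $h(f;\mathcal U_\infty)=\limsup_{n\to\infty}\frac1n\log_2\mathcal N\big(\bigvee_{i=0}^n f_0^{-i}\mathcal U_i\big)$, where $\mathcal N$ is the minimal cardinality of a finite subcover and $\bigvee$ denotes the join (all intersections $U_0\cap\cdots\cap U_n$ with $U_i$ from the $i$-th cover). Then $h_{\mathrm{est},\mathrm{cov}}(\alpha,K):=\sup h(f;\mathcal U_\infty)$ over all $(\alpha,K)$-admissible $\mathcal U_\infty$. Estimation entropy: a set $S\subset K$ is $(T,\varepsilon,\alpha,K)$-spanning ($T\in\mathbb Z_{>0}$) if for each $x\in K$ there is $y\in S$ with $d(f^t(x),f^t(y))<\varepsilon e^{-\alpha t}$ for all $t\in\{0,\ldots,T\}$;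 with $s^*_{\mathrm{est}}(T,\varepsilon,\alpha,K)$ the minimal cardinality of such a set, $h_{\mathrm{est}}(\alpha,K)=\lim_{\varepsilon\downarrow0}\limsup_{T\to\infty}\frac1T\log_2 s^*_{\mathrm{est}}(T,\varepsilon,\alpha,K)$. (Equivalently via maximal $(T,\varepsilon,\alpha,K)$-separated sets: $E\subset K$ such that distinct $x,y\in E$ satisfy $d(f^t(x),f^t(y))\ge\varepsilon e^{-\alpha t}$ for some $t\in\{0,\ldots,T\}$.) *)

theory Defs
  imports "HOL-Analysis.Analysis" "HOL-Library.Liminf_Limsup"
begin

definition Kk :: "('a \<Rightarrow> 'a) \<Rightarrow> 'a set \<Rightarrow> nat \<Rightarrow> 'a set" where
  "Kk f K k = (f ^^ k) ` K"

definition rel_open_cover :: "'a::metric_space set set \<Rightarrow> 'a set \<Rightarrow> bool" where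
  "rel_open_cover \<U> A \<longleftrightarrow> (\<forall>U\<in>\<U>. openin (top_of_set A) U) \<and> \<Union>\<U> = A"

definition lebesgue_number :: "'a::metric_space set set \<Rightarrow> 'a set \<Rightarrow> ereal" where
  "lebesgue_number \<U> A =
     Sup (ereal ` {r. r > 0 \<and> (\<forall>x\<in>A. \<exists>U\<in>\<U>. {y\<in>A. dist x y < r} \<subseteq> U)})"

definition admissible :: "('a::metric_space \<Rightarrow> 'a) \<Rightarrow> real \<Rightarrow> 'a set \<Rightarrow> (nat \<Rightarrow> 'a set set) \<Rightarrow> bool" where
  "admissible f \<alpha> K \<U> \<longleftrightarrow>
     (\<forall>k. rel_open_cover (\<U> k) (Kk f K k)) \<and>
     (\<exists>\<epsilon>>0. \<forall>k. lebesgue_number (\<U> k) (Kk f K k) \<ge> ereal (\<epsilon> * exp (- \<alpha> * real k)))"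

definition join_cover :: "('a \<Rightarrow> 'a) \<Rightarrow> 'a set \<Rightarrow> (nat \<Rightarrow> 'a set set) \<Rightarrow> nat \<Rightarrow> 'a set set" where
  "join_cover f K \<U> n =
     {{x\<in>K. \<forall>i\<le>n. (f ^^ i) x \<in> V i} | V. \<forall>i\<le>n. V i \<in> \<U> i}"

definition min_subcover :: "'a set set \<Rightarrow> 'a set \<Rightarrow> nat" where
  "min_subcover \<C> A = Inf {card \<F> | \<F>. \<F> \<subseteq> \<C> \<and> finite \<F> \<and> A \<subseteq> \<Union>\<F>}"

definition h_cov :: "('a::metric_space \<Rightarrow> 'a) \<Rightarrow> 'a set \<Rightarrow> (nat \<Rightarrow> 'a set set) \<Rightarrow> ereal" where
  "h_cov f K \<U> =
     limsup (\<lambda>n. ereal (log 2 (real (min_subcover (join_cover f K \<U> n) K)) / real n))"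

definition h_est_cov :: "('a::metric_space \<Rightarrow> 'a) \<Rightarrow> real \<Rightarrow> 'a set \<Rightarrow> ereal" where
  "h_est_cov f \<alpha> K = (SUP \<U> \<in> {\<U>. admissible f \<alpha> K \<U>}. h_cov f K \<U>)"

definition spanning :: "('a::metric_space \<Rightarrow> 'a) \<Rightarrow> nat \<Rightarrow> real \<Rightarrow> real \<Rightarrow> 'a set \<Rightarrow> 'a set \<Rightarrow> bool" where
  "spanning f T \<epsilon> \<alpha> K S \<longleftrightarrow> S \<subseteq> K \<and>
     (\<forall>x\<in>K. \<exists>y\<in>S. \<forall>t\<in>{0..T}. dist ((f ^^ t) x) ((f ^^ t) y) < \<epsilon> * exp (- \<alpha> * real t))"

definition s_est :: "('a::metric_space \<Rightarrow> 'a) \<Rightarrow> nat \<Rightarrow> real \<Rightarrow> real \<Rightarrow> 'a set \<Rightarrow> nat" where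
  "s_est f T \<epsilon> \<alpha> K = Inf {card S | S. finite S \<and> spanning f T \<epsilon> \<alpha> K S}"

definition h_est :: "('a::metric_space \<Rightarrow> 'a) \<Rightarrow> real \<Rightarrow> 'a set \<Rightarrow> ereal" where
  "h_est f \<alpha> K =
     Lim (at_right 0) (\<lambda>\<epsilon>. limsup (\<lambda>T. ereal (log 2 (real (s_est f T \<epsilon> \<alpha> K)) / real T)))"

end

theory Submission
  imports Defs
begin

lemma cont_iter:
  fixes f :: "'a::topological_space \<Rightarrow> 'a"
  assumes "continuous_on UNIV f"
  shows "continuous_on UNIV (f ^^ t)"
proof (induction t)
  case 0 have "f ^^ 0 = (\<lambda>x. x)" by (simp add: id_def)
  then show ?case by (simp add: continuous_on_id')
next
  case (Suc t)
  have "continuous_on UNIV (f \<circ> (f ^^ t))"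
    by (rule continuous_on_compose[OF Suc]) (rule continuous_on_subset[OF assms], simp)
  then show ?case by simp
qed

lemma span_exists:
  fixes f :: "'a::metric_space \<Rightarrow> 'a"
  assumes cont: "continuous_on UNIV f" and K: "compact K" and e: "\<epsilon> > 0"
  shows "\<exists>S. finite S \<and> spanning f T \<epsilon> \<alpha> K S"
proof -
  define Ob where "Ob y = (\<Inter>t\<in>{0..T}. (f ^^ t) -` ball ((f ^^ t) y) (\<epsilon> * exp (- \<alpha> * real t)))" for y
  have opn: "open (Ob y)" for y
    unfolding Ob_def by (intro open_INT ballI open_vimage cont_iter[OF cont]) auto
  have cov: "K \<subseteq> (\<Union>y\<in>K. Ob y)"
    using e by (auto simp: Ob_def)
  obtain C' where C': "C' \<subseteq> K" "finite C'" "K \<subseteq> (\<Union>y\<in>C'. Ob y)"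
    using compactE_image[OF K, of K Ob] opn cov by metis
  have "spanning f T \<epsilon> \<alpha> K C'"
    unfolding spanning_def
  proof (intro conjI ballI)
    fix x assume "x \<in> K"
    then obtain y where y: "y \<in> C'" "x \<in> Ob y" using C' by blast
    have "\<forall>t\<in>{0..T}. dist ((f ^^ t) x) ((f ^^ t) y) < \<epsilon> * exp (- \<alpha> * real t)"
      using y(2) by (auto simp: Ob_def dist_commute)
    then show "\<exists>y\<in>C'. \<forall>t\<in>{0..T}. dist ((f ^^ t) x) ((f ^^ t) y) < \<epsilon> * exp (- \<alpha> * real t)"
      using y(1) by blast
  qed (use C' in auto)
  then show ?thesis using C' by blast
qed

lemma s_est_attained:
  fixes f :: "'a::metric_space \<Rightarrow> 'a"
  assumes cont: "continuous_on UNIV f" and K: "compact K" and e: "\<epsilon> > 0"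
  shows "\<exists>S. finite S \<and> spanning f T \<epsilon> \<alpha> K S \<and> card S = s_est f T \<epsilon> \<alpha> K"
proof -
  have "{card S | S. finite S \<and> spanning f T \<epsilon> \<alpha> K S} \<noteq> {}"
    using span_exists[OF assms] by blast
  from Inf_nat_def1[OF this] show ?thesis unfolding s_est_def by auto
qed

lemma s_est_le:
  assumes "finite S" "spanning f T \<epsilon> \<alpha> K S"
  shows "s_est f T \<epsilon> \<alpha> K \<le> card S"
  unfolding s_est_def by (rule cInf_lower) (use assms in auto)

lemma s_est_mono:
  fixes f :: "'a::metric_space \<Rightarrow> 'a"
  assumes cont: "continuous_on UNIV f" and K: "compact K" and e: "0 < \<epsilon>" "\<epsilon> \<le> \<epsilon>'"
  shows "s_est f T \<epsilon>' \<alpha> K \<le> s_est f T \<epsilon> \<alpha> K"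
proof -
  obtain S where S: "finite S" "spanning f T \<epsilon> \<alpha> K S" "card S = s_est f T \<epsilon> \<alpha> K"
    using s_est_attained[OF cont K e(1)] by blast
  have "spanning f T \<epsilon>' \<alpha> K S"
    using S(2) e unfolding spanning_def
    by (meson less_le_trans mult_right_mono exp_ge_zero)
  then show ?thesis using s_est_le[OF S(1)] S(3) by simp
qed

lemma log_div_mono:
  assumes "(a::nat) \<le> b"
  shows "ereal (log 2 (real a) / real n) \<le> ereal (log 2 (real b) / real n)"
proof -
  have "log 2 (real a) \<le> log 2 (real b)"
  proof (cases "a = 0")
    case True then show ?thesis using assms
      by (cases "b = 0") (auto simp: log_def)
  next
    case False then show ?thesis using assms by simp
  qed
  then show ?thesis by (simp add: divide_right_mono)
qed

lemma leb_ball: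
  assumes leb: "lebesgue_number \<U> A \<ge> ereal r" and r: "0 < s" "s < r" and x: "x \<in> A"
  shows "\<exists>V\<in>\<U>. {z\<in>A. dist x z < s} \<subseteq> V"
proof -
  let ?R = "{r. r > 0 \<and> (\<forall>x\<in>A. \<exists>U\<in>\<U>. {y\<in>A. dist x y < r} \<subseteq> U)}"
  have "ereal s < Sup (ereal ` ?R)" using leb r unfolding lebesgue_number_def
    using less_le_trans[of "ereal s" "ereal r"] by auto
  then obtain r' where "r' \<in> ?R" "s < r'" by (auto simp: less_Sup_iff)
  then obtain V where "V \<in> \<U>" "{y\<in>A. dist x y < r'} \<subseteq> V" using x by blast
  then show ?thesis using \<open>s < r'\<close> by (intro bexI[of _ V]) auto
qed

lemma join_le_span:
  fixes f :: "'a::metric_space \<Rightarrow> 'a"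
  assumes cont: "continuous_on UNIV f" and K: "compact K" and e: "\<epsilon> > 0"
    and leb: "\<And>k. lebesgue_number (\<U> k) (Kk f K k) \<ge> ereal (\<epsilon> * exp (- \<alpha> * real k))"
  shows "\<exists>F. F \<subseteq> join_cover f K \<U> n \<and> finite F \<and> K \<subseteq> \<Union>F \<and> card F \<le> s_est f n (\<epsilon>/2) \<alpha> K"
proof -
  obtain S where S: "finite S" "spanning f n (\<epsilon>/2) \<alpha> K S" "card S = s_est f n (\<epsilon>/2) \<alpha> K"
    using s_est_attained[OF cont K, of "\<epsilon>/2"] e by auto
  have "\<forall>y\<in>K. \<forall>i. \<exists>V. V \<in> \<U> i \<and> {z\<in>Kk f K i. dist ((f ^^ i) y) z < \<epsilon>/2 * exp (- \<alpha> * real i)} \<subseteq> V"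
  proof (intro ballI allI)
    fix y i assume "y \<in> K"
    then have "(f ^^ i) y \<in> Kk f K i" by (simp add: Kk_def)
    moreover have "0 < \<epsilon>/2 * exp (- \<alpha> * real i)" "\<epsilon>/2 * exp (- \<alpha> * real i) < \<epsilon> * exp (- \<alpha> * real i)"
      using e by auto
    ultimately show "\<exists>V. V \<in> \<U> i \<and> {z\<in>Kk f K i. dist ((f ^^ i) y) z < \<epsilon>/2 * exp (- \<alpha> * real i)} \<subseteq> V"
      using leb_ball[OF leb] by blast
  qed
  then obtain V where V: "\<And>y i. y \<in> K \<Longrightarrow> V y i \<in> \<U> i \<and> {z\<in>Kk f K i. dist ((f ^^ i) y) z < \<epsilon>/2 * exp (- \<alpha> * real i)} \<subseteq> V y i"
    by metis
  define W where "W y = {x\<in>K. \<forall>i\<le>n. (f ^^ i) x \<in> V y i}" for y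
  have SK: "S \<subseteq> K" using S(2) by (simp add: spanning_def)
  have "W ` S \<subseteq> join_cover f K \<U> n"
    unfolding join_cover_def W_def using V SK by blast
  moreover have "K \<subseteq> \<Union>(W ` S)"
  proof
    fix x assume x: "x \<in> K"
    then obtain y where y: "y \<in> S" "\<forall>t\<in>{0..n}. dist ((f ^^ t) x) ((f ^^ t) y) < \<epsilon>/2 * exp (- \<alpha> * real t)"
      using S(2) by (auto simp: spanning_def)
    have "x \<in> W y"
      unfolding W_def
    proof (intro CollectI conjI allI impI x)
      fix i assume "i \<le> n"
      then have "dist ((f ^^ i) y) ((f ^^ i) x) < \<epsilon>/2 * exp (- \<alpha> * real i)"
        using y(2) by (simp add: dist_commute)
      moreover have "(f ^^ i) x \<in> Kk f K i" using x by (simp add: Kk_def)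
      ultimately show "(f ^^ i) x \<in> V y i" using V[of y i] y(1) SK by blast
    qed
    then show "x \<in> \<Union>(W ` S)" using y(1) by blast
  qed
  moreover have "card (W ` S) \<le> s_est f n (\<epsilon>/2) \<alpha> K"
    using card_image_le[OF S(1), of W] S(3) by simp
  ultimately show ?thesis using S(1) by blast
qed

lemma min_subcover_le:
  assumes "F \<subseteq> C" "finite F" "A \<subseteq> \<Union>F"
  shows "min_subcover C A \<le> card F"
  unfolding min_subcover_def by (rule cInf_lower) (use assms in auto)

definition ballcov :: "('a::metric_space \<Rightarrow> 'a) \<Rightarrow> real \<Rightarrow> 'a set \<Rightarrow> real \<Rightarrow> nat \<Rightarrow> 'a set set" where
  "ballcov f \<alpha> K \<epsilon> k = {{z\<in>Kk f K k. dist c z < \<epsilon> * exp (- \<alpha> * real k)} | c. c \<in> Kk f K k}"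

lemma ballcov_admissible:
  assumes e: "\<epsilon> > 0"
  shows "admissible f \<alpha> K (ballcov f \<alpha> K \<epsilon>)"
  unfolding admissible_def
proof (intro conjI allI exI[of _ \<epsilon>] e)
  fix k
  show "rel_open_cover (ballcov f \<alpha> K \<epsilon> k) (Kk f K k)"
    unfolding rel_open_cover_def
  proof (intro conjI ballI)
    fix U assume "U \<in> ballcov f \<alpha> K \<epsilon> k"
    then obtain c where "U = {z\<in>Kk f K k. dist c z < \<epsilon> * exp (- \<alpha> * real k)}"
      by (auto simp: ballcov_def)
    then have "U = Kk f K k \<inter> ball c (\<epsilon> * exp (- \<alpha> * real k))" by auto
    then show "openin (top_of_set (Kk f K k)) U"
      by (simp add: openin_open_Int)
  next
    show "\<Union>(ballcov f \<alpha> K \<epsilon> k) = Kk f K k"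
    proof
      show "\<Union>(ballcov f \<alpha> K \<epsilon> k) \<subseteq> Kk f K k" by (auto simp: ballcov_def)
    next
      show "Kk f K k \<subseteq> \<Union>(ballcov f \<alpha> K \<epsilon> k)"
      proof
        fix x assume x: "x \<in> Kk f K k"
        then have "x \<in> {z\<in>Kk f K k. dist x z < \<epsilon> * exp (- \<alpha> * real k)}" using e by simp
        moreover have "{z\<in>Kk f K k. dist x z < \<epsilon> * exp (- \<alpha> * real k)} \<in> ballcov f \<alpha> K \<epsilon> k"
          using x unfolding ballcov_def by blast
        ultimately show "x \<in> \<Union>(ballcov f \<alpha> K \<epsilon> k)" by blast
      qed
    qed
  qed
  let ?r = "\<epsilon> * exp (- \<alpha> * real k)"
  have "?r \<in> {r. r > 0 \<and> (\<forall>x\<in>Kk f K k. \<exists>U\<in>ballcov f \<alpha> K \<epsilon> k. {y\<in>Kk f K k. dist x y < r} \<subseteq> U)}"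
    using e by (auto simp: ballcov_def)
  then show "lebesgue_number (ballcov f \<alpha> K \<epsilon> k) (Kk f K k) \<ge> ereal ?r"
    unfolding lebesgue_number_def by (intro Sup_upper imageI)
qed

lemma span_le_join:
  fixes f :: "'a::metric_space \<Rightarrow> 'a"
  assumes cont: "continuous_on UNIV f" and K: "compact K" and e: "\<epsilon> > 0"
  shows "s_est f n (2*\<epsilon>) \<alpha> K \<le> min_subcover (join_cover f K (ballcov f \<alpha> K \<epsilon>) n) K"
proof -
  let ?J = "join_cover f K (ballcov f \<alpha> K \<epsilon>) n"
  have leb: "\<And>k. lebesgue_number (ballcov f \<alpha> K \<epsilon> k) (Kk f K k) \<ge> ereal (\<epsilon> * exp (- \<alpha> * real k))"
  proof -
    fix k
    let ?r = "\<epsilon> * exp (- \<alpha> * real k)"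
    have "?r \<in> {r. r > 0 \<and> (\<forall>x\<in>Kk f K k. \<exists>U\<in>ballcov f \<alpha> K \<epsilon> k. {y\<in>Kk f K k. dist x y < r} \<subseteq> U)}"
      using e by (auto simp: ballcov_def)
    then show "lebesgue_number (ballcov f \<alpha> K \<epsilon> k) (Kk f K k) \<ge> ereal ?r"
      unfolding lebesgue_number_def by (intro Sup_upper imageI)
  qed
  have ne: "{card F | F. F \<subseteq> ?J \<and> finite F \<and> K \<subseteq> \<Union>F} \<noteq> {}"
    using join_le_span[OF cont K e leb, of n] by blast
  obtain F where F: "F \<subseteq> ?J" "finite F" "K \<subseteq> \<Union>F" "card F = min_subcover ?J K"
    using Inf_nat_def1[OF ne] unfolding min_subcover_def by auto
  define F' where "F' = {W\<in>F. W \<noteq> {}}"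
  define p where "p W = (SOME x. x \<in> W)" for W :: "'a set"
  have pW: "p W \<in> W" if "W \<in> F'" for W
    using that unfolding F'_def p_def by (auto intro: someI_ex)
  have JK: "W \<subseteq> K" if "W \<in> ?J" for W
    using that by (auto simp: join_cover_def)
  have fin: "finite (p ` F')" using F(2) by (simp add: F'_def)
  have "spanning f n (2*\<epsilon>) \<alpha> K (p ` F')"
    unfolding spanning_def
  proof (intro conjI ballI)
    show "p ` F' \<subseteq> K" using pW JK F(1) F'_def by blast
  next
    fix x assume x: "x \<in> K"
    then obtain W where W: "W \<in> F" "x \<in> W" using F(3) by blast
    then have W': "W \<in> F'" by (auto simp: F'_def)
    obtain V where V: "W = {x\<in>K. \<forall>i\<le>n. (f ^^ i) x \<in> V i}" "\<forall>i\<le>n. V i \<in> ballcov f \<alpha> K \<epsilon> i"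
      using W(1) F(1) by (auto simp: join_cover_def)
    have "\<forall>t\<in>{0..n}. dist ((f ^^ t) x) ((f ^^ t) (p W)) < 2*\<epsilon> * exp (- \<alpha> * real t)"
    proof
      fix t assume "t \<in> {0..n}"
      then have t: "t \<le> n" by simp
      obtain c where c: "V t = {z\<in>Kk f K t. dist c z < \<epsilon> * exp (- \<alpha> * real t)}"
        using V(2) t by (auto simp: ballcov_def)
      have "(f ^^ t) x \<in> V t" "(f ^^ t) (p W) \<in> V t"
        using W(2) pW[OF W'] V(1) t by auto
      then have "dist c ((f ^^ t) x) < \<epsilon> * exp (- \<alpha> * real t)" "dist c ((f ^^ t) (p W)) < \<epsilon> * exp (- \<alpha> * real t)"
        using c by auto
      then show "dist ((f ^^ t) x) ((f ^^ t) (p W)) < 2*\<epsilon> * exp (- \<alpha> * real t)"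
        using dist_triangle3[of "(f ^^ t) x" "(f ^^ t) (p W)" c] by linarith
    qed
    then show "\<exists>y\<in>p ` F'. \<forall>t\<in>{0..n}. dist ((f ^^ t) x) ((f ^^ t) y) < 2*\<epsilon> * exp (- \<alpha> * real t)"
      using W' by blast
  qed
  then have "s_est f n (2*\<epsilon>) \<alpha> K \<le> card (p ` F')" by (rule s_est_le[OF fin])
  also have "\<dots> \<le> card F'" using F(2) by (intro card_image_le) (simp add: F'_def)
  also have "\<dots> \<le> card F" using F(2) by (intro card_mono) (auto simp: F'_def)
  finally show ?thesis using F(4) by simp
qed

theorem mainTheorem2:
  fixes f :: "'a::metric_space \<Rightarrow> 'a" and K :: "'a set" and \<alpha> :: real
  assumes "continuous_on UNIV f" and "compact K" and "\<alpha> \<ge> 0"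
  shows "h_est_cov f \<alpha> K = h_est f \<alpha> K"
proof -
  note cont = assms(1) and K = assms(2)
  define g where "g \<epsilon> = limsup (\<lambda>T. ereal (log 2 (real (s_est f T \<epsilon> \<alpha> K)) / real T))" for \<epsilon>
  have anti: "g \<epsilon>' \<le> g \<epsilon>" if "0 < \<epsilon>" "\<epsilon> \<le> \<epsilon>'" for \<epsilon> \<epsilon>'
    unfolding g_def
    apply (rule Limsup_mono)
    apply (rule always_eventually)
    apply (rule allI)
    apply (rule log_div_mono)
    apply (rule s_est_mono[OF cont K that])
    done
  define S where "S = (SUP \<epsilon>\<in>{0<..}. g \<epsilon>)"
  have lim: "(g \<longlongrightarrow> S) (at_right 0)"
  proof (rule order_tendstoI)
    fix a assume "a < S"
    then obtain \<epsilon>0 where e0: "\<epsilon>0 > 0" "a < g \<epsilon>0" unfolding S_def by (auto simp: less_SUP_iff)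
    show "\<forall>\<^sub>F x in at_right 0. a < g x"
      using eventually_at_right_real[OF e0(1)]
    proof eventually_elim
      case (elim x)
      then have "g \<epsilon>0 \<le> g x" by (intro anti) auto
      then show ?case using e0(2) by (rule order.strict_trans2[rotated])
    qed
  next
    fix a assume "S < a"
    show "\<forall>\<^sub>F x in at_right 0. g x < a"
      using eventually_at_right_less[of "0::real"]
    proof eventually_elim
      case (elim x)
      then have "g x \<le> S" unfolding S_def by (intro SUP_upper) auto
      then show ?case using \<open>S < a\<close> by auto
    qed
  qed
  have "h_est f \<alpha> K = Lim (at_right 0) g"
    unfolding h_est_def g_def by (rule refl)
  also have "\<dots> = S" by (rule tendsto_Lim[OF trivial_limit_at_right_real lim])
  finally have hest: "h_est f \<alpha> K = S" .
  have "h_est_cov f \<alpha> K \<le> S"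
    unfolding h_est_cov_def
  proof (rule SUP_least)
    fix \<U> assume "\<U> \<in> {\<U>. admissible f \<alpha> K \<U>}"
    then obtain \<epsilon> where e: "\<epsilon> > 0"
      and leb: "\<And>k. lebesgue_number (\<U> k) (Kk f K k) \<ge> ereal (\<epsilon> * exp (- \<alpha> * real k))"
      by (auto simp: admissible_def)
    have "h_cov f K \<U> \<le> g (\<epsilon>/2)"
      unfolding h_cov_def g_def
      apply (rule Limsup_mono)
      apply (rule always_eventually)
      apply (rule allI)
      apply (rule log_div_mono)
      subgoal for n
      proof -
      obtain F where F: "F \<subseteq> join_cover f K \<U> n" "finite F" "K \<subseteq> \<Union>F" "card F \<le> s_est f n (\<epsilon>/2) \<alpha> K"
        using join_le_span[OF cont K e leb, of n] by (elim exE conjE) assumption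
      have "min_subcover (join_cover f K \<U> n) K \<le> card F"
        by (rule min_subcover_le[OF F(1-3)])
      then show ?thesis
        using F(4) by linarith
      qed done
    also have "\<dots> \<le> S" unfolding S_def using e by (intro SUP_upper) auto
    finally show "h_cov f K \<U> \<le> S" .
  qed
  moreover have "S \<le> h_est_cov f \<alpha> K"
    unfolding S_def
  proof (rule SUP_least)
    fix \<epsilon> :: real assume "\<epsilon> \<in> {0<..}"
    then have e: "\<epsilon>/2 > 0" by simp
    have "g \<epsilon> = g (2 * (\<epsilon>/2))" by simp
    also have "\<dots> \<le> h_cov f K (ballcov f \<alpha> K (\<epsilon>/2))"
      unfolding h_cov_def g_def
      apply (rule Limsup_mono)
      apply (rule always_eventually)
      apply (rule allI)
      apply (rule log_div_mono)
      apply (rule span_le_join[OF cont K e])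
      done
    also have "\<dots> \<le> h_est_cov f \<alpha> K"
      unfolding h_est_cov_def using ballcov_admissible[OF e] by (intro SUP_upper) auto
    finally show "g \<epsilon> \<le> h_est_cov f \<alpha> K" .
  qed
  ultimately show ?thesis using hest by simp
qed

end
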